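(* Let $p$ be a prime, $R$ an $F$-pure ring of characteristic $p$, and $f\in R$ a non-zero non-unit. Let $d\ge1$ be an integer and $\alpha\in[0,1]$ with $(p^d-1)\alpha\in\mathbb{N}$. If the inclusion $R\cdot f^{\langle\alpha\rangle_d}\subseteq R^{1/p^d}$ splits over $R$, then $\alpha\le\operatorname{fpt}(f)$.
   Context: A ring $R$ of characteristic $p$ is $F$-pure if $R\subseteq R^{1/p}$ splits as a map of $R$-modules. Roots and splitting. $R^{1/p^e}$ is the ring of formal $p^e$-th roots of elements of $R$, containing $R$ via $r\mapsto(r^{p^e})^{1/p^e}$. For $a\in\mathbb{N}$, $f^{a/p^e}:=(f^a)^{1/p^e}$. The inclusion $R\cdot t\subseteq R^{1/p^e}$ splits if some $R$-linear $\theta:R^{1/p^e}\to R$ has $\theta(t)=1$. $F$-pure threshold. $(R,f^\lambda)$ is $F$-pure if $R\cdot f^{\lfloor (p^e-1)\lambda\rfloor/p^e}\subseteq R^{1/p^e}$ splits for all $e\ge1$. $\operatorname{fpt}(f)$ is the supremum of $\lambda\ge0$ with $(R,f^\lambda)$ $F$-pure. Truncations. For $\alpha\in(0,1]$ with non-terminating base $p$ expansion $\alpha=\sum_{e\ge1}a_e/p^e$ (digits $0\le a_e\le p-1$, not all eventually zero), $\langle\alpha\rangle_e:=\sum_{i=1}^e a_i/p^i\in\frac1{p^e}\mathbb{N}$, so that $f^{\langle\alpha\rangle_e}\in R^{1/p^e}$. By convention $\langle0\rangle_e=0$. *)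

theory Defs
  imports Complex_Main "HOL-Computational_Algebra.Primes"
begin

text \<open>The ring R^{1/p^e} of formal p^e-th roots is identified with R itself via
  s^{1/p^e} <-> s; under this identification the inclusion R into R^{1/p^e}
  is r |-> r^(p^e), and an R-linear map theta : R^{1/p^e} -> R is exactly an
  additive map phi : R -> R with phi (r^(p^e) * s) = r * phi s.\<close>

definition root_linear :: "nat \<Rightarrow> nat \<Rightarrow> ('a::comm_ring_1 \<Rightarrow> 'a) \<Rightarrow> bool" where
  "root_linear p e \<phi> \<longleftrightarrow>
     (\<forall>x y. \<phi> (x + y) = \<phi> x + \<phi> y) \<and> (\<forall>r s. \<phi> (r ^ (p ^ e) * s) = r * \<phi> s)"

definition root_splits :: "nat \<Rightarrow> nat \<Rightarrow> 'a::comm_ring_1 \<Rightarrow> bool" where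
  "root_splits p e g \<longleftrightarrow> (\<exists>\<phi>. root_linear p e \<phi> \<and> \<phi> g = 1)"

text \<open>R is F-pure: R into R^{1/p} splits (i.e. R * 1^{1/p} splits).\<close>
definition F_pure :: "nat \<Rightarrow> 'a::comm_ring_1 itself \<Rightarrow> bool" where
  "F_pure p _ \<longleftrightarrow> root_splits p 1 (1::'a)"

definition pair_F_pure :: "nat \<Rightarrow> 'a::comm_ring_1 \<Rightarrow> real \<Rightarrow> bool" where
  "pair_F_pure p f lam \<longleftrightarrow>
     (\<forall>e\<ge>1. root_splits p e (f ^ nat \<lfloor>(real p ^ e - 1) * lam\<rfloor>))"

definition fpt :: "nat \<Rightarrow> 'a::comm_ring_1 \<Rightarrow> real" where
  "fpt p f = Sup {lam::real. lam \<ge> 0 \<and> pair_F_pure p f lam}"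

text \<open>Non-terminating base p expansion of alpha in (0,1]: digits a_1, a_2, ...
  (indexed from 1; a_0 is set to 0 for definiteness).\<close>
definition nonterm_digits :: "nat \<Rightarrow> real \<Rightarrow> nat \<Rightarrow> nat" where
  "nonterm_digits p \<alpha> = (THE a. a 0 = 0 \<and> (\<forall>i. a i \<le> p - 1) \<and>
       (\<lambda>i. real (a (Suc i)) / real p ^ Suc i) sums \<alpha> \<and>
       (\<forall>N. \<exists>i\<ge>N. a i \<noteq> 0))"

text \<open>Numerator of the truncation: <alpha>_e = trunc_num p alpha e / p^e,
  with the convention <0>_e = 0.\<close>
definition trunc_num :: "nat \<Rightarrow> real \<Rightarrow> nat \<Rightarrow> nat" where
  "trunc_num p \<alpha> e = (if \<alpha> = 0 then 0
      else (\<Sum>i=1..e. nonterm_digits p \<alpha> i * p ^ (e - i)))"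

end

theory Submission
  imports Defs
begin

lemma rs_mult:
  fixes g h :: "'a::comm_ring_1"
  assumes "root_splits p e (g * h)"
  shows "root_splits p e g"
proof -
  obtain \<phi> where l: "root_linear p e \<phi>" and v: "\<phi> (g * h) = 1"
    using assms unfolding root_splits_def by blast
  have "root_linear p e (\<lambda>x. \<phi> (h * x))"
    using l unfolding root_linear_def
    by (simp add: distrib_left) (metis mult.left_commute)
  moreover have "\<phi> (h * g) = 1" using v by (simp add: mult.commute)
  ultimately show ?thesis unfolding root_splits_def by blast
qed

lemma rs_pow_le:
  fixes f :: "'a::comm_ring_1"
  assumes "root_splits p e (f ^ b)" "a \<le> b"
  shows "root_splits p e (f ^ a)"
proof -
  have "f ^ b = f ^ a * f ^ (b - a)" using assms(2)
    by (simp add: power_add[symmetric])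
  then show ?thesis using rs_mult assms(1) by metis
qed

lemma rs_comp:
  fixes g h :: "'a::comm_ring_1"
  assumes "root_splits p a g" "root_splits p b h"
  shows "root_splits p (a + b) (g * h ^ (p ^ a))"
proof -
  obtain \<phi> where l: "root_linear p a \<phi>" and v: "\<phi> g = 1"
    using assms(1) unfolding root_splits_def by blast
  obtain \<psi> where l2: "root_linear p b \<psi>" and v2: "\<psi> h = 1"
    using assms(2) unfolding root_splits_def by blast
  have "root_linear p (a + b) (\<lambda>x. \<psi> (\<phi> x))"
    unfolding root_linear_def
  proof (intro conjI allI)
    fix x y show "\<psi> (\<phi> (x + y)) = \<psi> (\<phi> x) + \<psi> (\<phi> y)"
      using l l2 unfolding root_linear_def by simp
  next
    fix r s :: 'a
    have "r ^ p ^ (a + b) = (r ^ p ^ b) ^ p ^ a"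
      by (simp add: power_add power_mult[symmetric] mult.commute)
    then show "\<psi> (\<phi> (r ^ p ^ (a + b) * s)) = r * \<psi> (\<phi> s)"
      using l l2 unfolding root_linear_def by simp
  qed
  moreover have "\<psi> (\<phi> (g * h ^ (p ^ a))) = 1"
    using l v v2 unfolding root_linear_def by (metis mult.commute mult_1_right)
  ultimately show ?thesis unfolding root_splits_def by blast
qed

lemma rs_down:
  fixes g :: "'a::comm_ring_1"
  assumes "prime p" "CHAR('a) = p" "root_splits p (e + c) (g ^ (p ^ c))"
  shows "root_splits p e g"
proof -
  obtain \<phi> where l: "root_linear p (e + c) \<phi>" and v: "\<phi> (g ^ (p ^ c)) = 1"
    using assms(3) unfolding root_splits_def by blast
  have "root_linear p e (\<lambda>x. \<phi> (x ^ (p ^ c)))"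
    unfolding root_linear_def
  proof (intro conjI allI)
    fix x y :: 'a
    have "(x + y) ^ (p ^ c) = x ^ (p ^ c) + y ^ (p ^ c)"
      using freshmans_dream'[where ?'a='a and m="p ^ c" and n=c and x=x and y=y] assms by simp
    then show "\<phi> ((x + y) ^ p ^ c) = \<phi> (x ^ p ^ c) + \<phi> (y ^ p ^ c)"
      using l unfolding root_linear_def by simp
  next
    fix r s :: 'a
    have "(r ^ p ^ e * s) ^ p ^ c = r ^ p ^ (e + c) * s ^ p ^ c"
      by (simp add: power_mult_distrib power_add power_mult[symmetric])
    then show "\<phi> ((r ^ p ^ e * s) ^ p ^ c) = r * \<phi> (s ^ p ^ c)"
      using l unfolding root_linear_def by simp
  qed
  then show ?thesis using v unfolding root_splits_def by blast
qed

lemma rs_iter: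
  fixes f :: "'a::comm_ring_1"
  assumes "root_splits p d (f ^ k)"
  shows "root_splits p (Suc n * d) (f ^ (k * (\<Sum>j<Suc n. p ^ (d * j))))"
proof (induction n)
  case 0 then show ?case using assms by simp
next
  case (Suc n)
  have "root_splits p (d + Suc n * d) (f ^ k * (f ^ (k * (\<Sum>j<Suc n. p ^ (d * j)))) ^ (p ^ d))"
    by (rule rs_comp[OF assms Suc])
  moreover have "f ^ k * (f ^ (k * (\<Sum>j<Suc n. p ^ (d * j)))) ^ (p ^ d)
     = f ^ (k * (\<Sum>j<Suc (Suc n). p ^ (d * j)))"
  proof -
    have "(\<Sum>j<Suc (Suc n). p ^ (d * j)) = 1 + p ^ d * (\<Sum>j<Suc n. p ^ (d * j))"
      by (subst sum.lessThan_Suc_shift) (simp add: sum_distrib_left distrib_left power_add mult_Suc_right)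
    then have "k * (\<Sum>j<Suc (Suc n). p ^ (d * j)) = k + k * (\<Sum>j<Suc n. p ^ (d * j)) * p ^ d"
      by (simp add: algebra_simps)
    moreover have "f ^ k * (f ^ (k * (\<Sum>j<Suc n. p ^ (d * j)))) ^ (p ^ d)
       = f ^ (k + k * (\<Sum>j<Suc n. p ^ (d * j)) * p ^ d)"
      by (simp only: power_add power_mult)
    ultimately show ?thesis by simp
  qed
  ultimately show ?case by (simp add: add.commute)
qed



definition ND :: "nat \<Rightarrow> real \<Rightarrow> (nat \<Rightarrow> nat) \<Rightarrow> bool" where
  "ND p \<alpha> a \<longleftrightarrow> a 0 = 0 \<and> (\<forall>i. a i \<le> p - 1) \<and>
       (\<lambda>i. real (a (Suc i)) / real p ^ Suc i) sums \<alpha> \<and>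
       (\<forall>N. \<exists>i\<ge>N. a i \<noteq> 0)"

definition Tn :: "(nat \<Rightarrow> nat) \<Rightarrow> nat \<Rightarrow> nat \<Rightarrow> nat" where
  "Tn a p e = (\<Sum>i=1..e. a i * p ^ (e - i))"

lemma Tn_0: "Tn a p 0 = 0" by (simp add: Tn_def)

lemma Tn_Suc: "Tn a p (Suc j) = p * Tn a p j + a (Suc j)"
proof -
  have "(\<Sum>i=1..j. a i * p ^ (Suc j - i)) = p * (\<Sum>i=1..j. a i * p ^ (j - i))"
    unfolding sum_distrib_left by (rule sum.cong) (auto simp: Suc_diff_le)
  then show ?thesis unfolding Tn_def by (simp add: sum.cl_ivl_Suc)
qed

lemma Tn_real:
  assumes "p > 0"
  shows "(\<Sum>i<e. real (a (Suc i)) / real p ^ Suc i) = real (Tn a p e) / real p ^ e"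
proof (induction e)
  case 0 then show ?case by (simp add: Tn_0)
next
  case (Suc e)
  then show ?case using assms by (simp add: Tn_Suc field_simps)
qed

lemma ND_T:
  assumes p: "p \<ge> 2" and nd: "ND p \<alpha> a"
  shows "real (Tn a p e) < real p ^ e * \<alpha> \<and> real p ^ e * \<alpha> \<le> real (Tn a p e) + 1"
proof -
  define f where "f i = real (a (Suc i)) / real p ^ Suc i" for i
  have fs: "f sums \<alpha>" using nd unfolding ND_def f_def by simp
  have summ: "summable f" using fs sums_summable by blast
  have split: "\<alpha> = (\<Sum>n. f (n + e)) + sum f {..<e}"
    using suminf_split_initial_segment[OF summ, of e] sums_unique[OF fs] by simp
  have tsum: "(\<lambda>n. f (n + e)) sums (\<Sum>n. f (n + e))"
    using summable_ignore_initial_segment[OF summ] summable_sums by blast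
  have pp: "real p \<ge> 2" using p by simp
  define c where "c = (real p - 1) / real p ^ Suc e"
  have geo: "(\<lambda>n. c * (1 / real p) ^ n) sums (c * (1 / (1 - 1 / real p)))"
    by (rule sums_mult, rule geometric_sums) (use pp in auto)
  have cval: "c * (1 / (1 - 1 / real p)) = 1 / real p ^ e"
    unfolding c_def using pp by (simp add: field_simps)
  have le: "f (n + e) \<le> c * (1 / real p) ^ n" for n
  proof -
    have "a (Suc (n + e)) \<le> p - 1" using nd unfolding ND_def by blast
    then have "real (a (Suc (n + e))) \<le> real p - 1" using p by linarith
    moreover have "real p ^ Suc (n + e) = real p ^ Suc e * real p ^ n"
      by (simp add: power_add[symmetric] add.commute)
    ultimately show ?thesis unfolding f_def c_def using pp
      by (simp add: power_divide mult.assoc) (rule divide_right_mono, auto)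
  qed
  have up: "(\<Sum>n. f (n + e)) \<le> 1 / real p ^ e"
    using sums_le[OF le tsum geo] cval by simp
  obtain i where i: "i \<ge> Suc e" "a i \<noteq> 0" using nd unfolding ND_def by blast
  define j where "j = i - Suc e"
  have ij: "Suc (j + e) = i" using i(1) unfolding j_def by simp
  have fpos: "f (j + e) > 0" unfolding f_def using ij i(2) pp by simp
  have nonneg: "\<And>n. 0 \<le> f (n + e)" unfolding f_def by simp
  have lo: "(\<Sum>n. f (n + e)) > 0"
    using suminf_pos2[OF summable_ignore_initial_segment[OF summ] nonneg fpos] .
  have ps: "sum f {..<e} = real (Tn a p e) / real p ^ e"
    unfolding f_def using Tn_real[where p=p and e=e and a=a] p by simp
  have pe: "real p ^ e > 0" using pp by simp
  have A: "real (Tn a p e) / real p ^ e < \<alpha>" using split lo ps by simp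
  have B: "\<alpha> \<le> (real (Tn a p e) + 1) / real p ^ e"
    using split up ps by (simp add: add_divide_distrib)
  show ?thesis using A B pe by (simp add: field_simps)
qed

lemma ND_T_ceil:
  assumes p: "p \<ge> 2" and nd: "ND p \<alpha> a"
  shows "int (Tn a p e) = \<lceil>real p ^ e * \<alpha>\<rceil> - 1"
proof -
  have "\<lceil>real p ^ e * \<alpha>\<rceil> = int (Tn a p e) + 1"
    by (rule ceiling_unique) (use ND_T[OF p nd, of e] in auto)
  then show ?thesis by simp
qed

lemma ND_unique:
  assumes p: "p \<ge> 2" and "ND p \<alpha> a" "ND p \<alpha> b"
  shows "a = b"
proof
  fix i
  have T: "Tn a p e = Tn b p e" for e
    using ND_T_ceil[OF p assms(2), of e] ND_T_ceil[OF p assms(3), of e] by simp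
  show "a i = b i"
  proof (cases i)
    case 0 then show ?thesis using assms unfolding ND_def by simp
  next
    case (Suc j)
    then show ?thesis using T[of "Suc j"] T[of j] by (simp add: Tn_Suc)
  qed
qed

lemma ND_exists:
  assumes p: "p \<ge> 2" and a0: "0 < \<alpha>" and a1: "\<alpha> \<le> 1"
  shows "\<exists>a. ND p \<alpha> a"
proof -
  define C where "C e = \<lceil>real p ^ e * \<alpha>\<rceil>" for e
  have pp: "real p \<ge> 2" using p by simp
  have C1: "C e \<ge> 1" for e
  proof -
    have "real p ^ e * \<alpha> > 0" using pp a0 by simp
    then show ?thesis unfolding C_def by (simp add: le_ceiling_iff)
  qed
  have C0: "C 0 = 1" unfolding C_def using a0 a1 by (simp add: ceiling_unique)
  have Cup: "C (Suc j) \<le> int p * C j" for j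
  proof -
    have "real p ^ j * \<alpha> \<le> of_int (C j)" unfolding C_def by simp
    then have "real p * (real p ^ j * \<alpha>) \<le> real p * of_int (C j)"
      using pp by (simp add: mult_left_mono)
    then show ?thesis unfolding C_def by (simp add: ceiling_le mult.assoc)
  qed
  have Clo: "C (Suc j) \<ge> int p * (C j - 1) + 1" for j
  proof -
    have "of_int (C j - 1) < real p ^ j * \<alpha>" unfolding C_def by linarith
    then have "real p * of_int (C j - 1) < real p * (real p ^ j * \<alpha>)"
      using pp by simp
    then show ?thesis unfolding C_def by (simp add: le_ceiling_iff mult.assoc)
  qed
  define a where "a i = (case i of 0 \<Rightarrow> 0 | Suc j \<Rightarrow> nat (C (Suc j) - 1 - int p * (C j - 1)))" for i
  have aS: "int (a (Suc j)) = C (Suc j) - 1 - int p * (C j - 1)" for j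
    using Clo[of j] unfolding a_def by simp
  have T: "int (Tn a p e) = C e - 1" for e
  proof (induction e)
    case 0 then show ?case by (simp add: Tn_0 C0)
  next
    case (Suc e)
    have "int (Tn a p (Suc e)) = int p * int (Tn a p e) + int (a (Suc e))"
      by (simp add: Tn_Suc)
    also have "\<dots> = int p * (C e - 1) + (C (Suc e) - 1 - int p * (C e - 1))"
      by (simp only: Suc.IH aS)
    finally show ?case by simp
  qed
  have abound: "a i \<le> p - 1" for i
  proof (cases i)
    case 0 then show ?thesis unfolding a_def by simp
  next
    case (Suc j)
    have m: "int p * (C j - 1) = int p * C j - int p" by (simp add: right_diff_distrib)
    have "int (a (Suc j)) \<le> int p - 1" using aS[of j] Cup[of j] m by linarith
    then show ?thesis using Suc p by simp
  qed
  define f where "f i = real (a (Suc i)) / real p ^ Suc i" for i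
  have ps: "sum f {..<e} = (of_int (C e) - 1) / real p ^ e" for e
  proof -
    have "sum f {..<e} = real (Tn a p e) / real p ^ e"
      unfolding f_def using Tn_real[where p=p and e=e and a=a] p by simp
    also have "real (Tn a p e) = of_int (C e) - 1"
      using T[of e] by (metis of_int_diff of_int_of_nat_eq of_int_1)
    finally show ?thesis .
  qed
  have bnd: "\<alpha> - (1 / real p) ^ e \<le> sum f {..<e} \<and> sum f {..<e} < \<alpha>" for e
  proof -
    have c1: "real p ^ e * \<alpha> \<le> of_int (C e)" unfolding C_def by simp
    have c2: "of_int (C e) - 1 < real p ^ e * \<alpha>" unfolding C_def by linarith
    have pe: "real p ^ e > 0" using pp by simp
    have q: "(1 / real p) ^ e = 1 / real p ^ e" by (simp add: power_divide)
    have "\<alpha> \<le> of_int (C e) / real p ^ e" using c1 pe by (simp add: pos_le_divide_eq mult.commute)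
    then have A: "\<alpha> - (1 / real p) ^ e \<le> (of_int (C e) - 1) / real p ^ e"
      unfolding q by (simp add: diff_divide_distrib)
    have B: "(of_int (C e) - 1) / real p ^ e < \<alpha>"
      using c2 pe by (simp add: pos_divide_less_eq mult.commute)
    show ?thesis unfolding ps using A B by simp
  qed
  have lim: "(\<lambda>e. sum f {..<e}) \<longlonglongrightarrow> \<alpha>"
  proof -
    define r where "r e = \<alpha> - sum f {..<e}" for e
    have "(\<lambda>e. (1 / real p) ^ e) \<longlonglongrightarrow> 0"
      by (rule LIMSEQ_power_zero) (use pp in simp)
    moreover have "\<forall>\<^sub>F n in sequentially. 0 \<le> r n"
    proof (intro always_eventually allI)
      fix n show "0 \<le> r n" using bnd[of n] by (simp add: r_def)
    qed
    moreover have "\<forall>\<^sub>F n in sequentially. r n \<le> (1 / real p) ^ n"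
    proof (intro always_eventually allI)
      fix n show "r n \<le> (1 / real p) ^ n" using bnd[of n] by (simp add: r_def)
    qed
    ultimately have "r \<longlonglongrightarrow> 0"
      using tendsto_sandwich[of "\<lambda>_. 0" r sequentially "\<lambda>n. (1 / real p) ^ n" 0] by simp
    then have "(\<lambda>e. \<alpha> - r e) \<longlonglongrightarrow> \<alpha> - 0" by (intro tendsto_diff tendsto_const)
    then show ?thesis by (simp add: r_def)
  qed
  have fs: "f sums \<alpha>" unfolding sums_def using lim .
  have nt: "\<exists>i\<ge>N. a i \<noteq> 0" for N
  proof (rule ccontr)
    assume "\<not> ?thesis"
    then have z: "\<forall>i\<ge>N. a i = 0" by auto
    have "f sums sum f {..<N}"
      by (rule sums_finite) (use z in \<open>auto simp: f_def\<close>)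
    then have "\<alpha> = sum f {..<N}" using fs sums_unique2 by blast
    then show False using bnd[of N] by simp
  qed
  have fe: "(\<lambda>i. real (a (Suc i)) / real p ^ Suc i) = f" by (simp add: f_def fun_eq_iff)
  have "a 0 = 0" by (simp add: a_def)
  then have "ND p \<alpha> a" unfolding ND_def fe using abound fs nt by blast
  then show ?thesis by blast
qed

lemma trunc_num_eq:
  assumes p: "p \<ge> 2" and a0: "0 < \<alpha>" and a1: "\<alpha> \<le> 1"
  shows "int (trunc_num p \<alpha> e) = \<lceil>real p ^ e * \<alpha>\<rceil> - 1"
proof -
  obtain a where a: "ND p \<alpha> a" using ND_exists[OF assms] by blast
  have "nonterm_digits p \<alpha> = a"
    unfolding nonterm_digits_def ND_def[symmetric]
    by (rule the_equality[where P="ND p \<alpha>", OF a]) (rule ND_unique[OF p _ a])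
  then have "trunc_num p \<alpha> e = Tn a p e"
    unfolding trunc_num_def Tn_def using a0 by simp
  then show ?thesis using ND_T_ceil[OF p a] by simp
qed


lemma geo_real:
  "(real p ^ d - 1) * (\<Sum>j<n. real p ^ (d * j)) = real p ^ (n * d) - 1"
proof -
  have a: "(\<Sum>j<n. real p ^ (d * j)) = (\<Sum>j<n. (real p ^ d) ^ j)" by (simp add: power_mult)
  have b: "real p ^ (n * d) = (real p ^ d) ^ n" by (simp add: power_mult mult.commute)
  show ?thesis unfolding a b using power_diff_1_eq[of "real p ^ d" n] by simp
qed

theorem mainTheorem7:
  fixes f :: "'a::comm_ring_1" and p d :: nat and \<alpha> :: real
  assumes "prime p"
    and "CHAR('a) = p"
    and "F_pure p TYPE('a)"
    and "f \<noteq> 0" and "\<not> f dvd 1"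
    and "d \<ge> 1"
    and "0 \<le> \<alpha>" and "\<alpha> \<le> 1"
    and "(real p ^ d - 1) * \<alpha> \<in> \<nat>"
    and "root_splits p d (f ^ trunc_num p \<alpha> d)"
  shows "\<alpha> \<le> fpt p f"
proof -
  have p2: "p \<ge> 2" using assms(1) prime_ge_2_nat by blast
  have pp: "real p \<ge> 2" using p2 by simp
  obtain k where k: "(real p ^ d - 1) * \<alpha> = real k"
    using assms(9) Nats_cases by metis
  have tk: "trunc_num p \<alpha> d = k"
  proof (cases "\<alpha> = 0")
    case True
    then show ?thesis using k unfolding trunc_num_def by simp
  next
    case False
    then have a0: "\<alpha> > 0" using assms(7) by simp
    have "real p ^ d * \<alpha> = real k + \<alpha>" using k by (simp add: algebra_simps)
    then have "\<lceil>real p ^ d * \<alpha>\<rceil> = int k + 1"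
      using a0 assms(8) by (intro ceiling_unique) auto
    then show ?thesis using trunc_num_eq[OF p2 a0 assms(8), of d] by simp
  qed
  have sk: "root_splits p d (f ^ k)" using assms(10) tk by simp
  have pf: "pair_F_pure p f \<alpha>"
    unfolding pair_F_pure_def
  proof (intro allI impI)
    fix e :: nat assume e1: "e \<ge> 1"
    define a where "a = nat \<lfloor>(real p ^ e - 1) * \<alpha>\<rfloor>"
    define S where "S = (\<Sum>j<e. p ^ (d * j))"
    define c where "c = e * d - e"
    have ec: "e * d = e + c" unfolding c_def using assms(6) by simp
    have it: "root_splits p (e * d) (f ^ (k * S))"
      using rs_iter[OF sk, of "e - 1"] e1 unfolding S_def by simp
    have Sr: "real (k * S) = (real p ^ (e * d) - 1) * \<alpha>"
    proof -
      have "real (k * S) = (real p ^ d - 1) * \<alpha> * (\<Sum>j<e. real p ^ (d * j))"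
        unfolding S_def using k by simp
      also have "\<dots> = ((real p ^ d - 1) * (\<Sum>j<e. real p ^ (d * j))) * \<alpha>"
        by (simp only: ac_simps)
      also have "\<dots> = (real p ^ (e * d) - 1) * \<alpha>"
        by (simp only: geo_real)
      finally show ?thesis .
    qed
    have pe1: "real p ^ e \<ge> 1" using pp by simp
    have ar: "real a \<le> (real p ^ e - 1) * \<alpha>"
      unfolding a_def using pe1 assms(7) by simp
    have pc1: "real p ^ c \<ge> 1" using pp by simp
    have "real (a * p ^ c) \<le> (real p ^ e - 1) * \<alpha> * real p ^ c"
      using ar pc1 by (simp add: mult_right_mono)
    also have "\<dots> = (real p ^ (e * d) - real p ^ c) * \<alpha>"
    proof -
      have "real p ^ (e * d) = real p ^ e * real p ^ c" by (simp only: ec power_add)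
      then show ?thesis by (simp add: algebra_simps)
    qed
    also have "\<dots> \<le> (real p ^ (e * d) - 1) * \<alpha>"
      using pc1 assms(7) by (simp add: mult_right_mono)
    finally have "real (a * p ^ c) \<le> real (k * S)" using Sr by simp
    then have le: "a * p ^ c \<le> k * S" by linarith
    have "root_splits p (e * d) (f ^ (a * p ^ c))" by (rule rs_pow_le[OF it le])
    then have "root_splits p (e + c) ((f ^ a) ^ (p ^ c))"
      by (simp add: ec power_mult)
    then show "root_splits p e (f ^ nat \<lfloor>(real p ^ e - 1) * \<alpha>\<rfloor>)"
      using rs_down[OF assms(1) assms(2)] unfolding a_def by blast
  qed
  define L where "L = {lam::real. lam \<ge> 0 \<and> pair_F_pure p f lam}"
  have inL: "\<alpha> \<in> L" unfolding L_def using pf assms(7) by simp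
  have bdd: "bdd_above L"
  proof (rule bdd_aboveI[of _ 2])
    fix lam assume "lam \<in> L"
    then have pl: "pair_F_pure p f lam" unfolding L_def by simp
    show "lam \<le> 2"
    proof (rule ccontr)
      assume "\<not> lam \<le> 2"
      then have l2: "lam > 2" by simp
      have ge: "(real p ^ 1 - 1) * lam \<ge> real p"
      proof -
        have "(real p - 1) * lam \<ge> (real p - 1) * 2"
          using l2 pp by (intro mult_left_mono) auto
        then show ?thesis using pp by simp
      qed
      have "nat \<lfloor>(real p ^ 1 - 1) * lam\<rfloor> \<ge> p"
        using ge le_nat_floor by fastforce
      moreover have "root_splits p 1 (f ^ nat \<lfloor>(real p ^ 1 - 1) * lam\<rfloor>)"
        using pl unfolding pair_F_pure_def by blast
      ultimately have "root_splits p 1 (f ^ p)" using rs_pow_le by blast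
      then obtain \<phi> where l: "root_linear p 1 \<phi>" and v: "\<phi> (f ^ p) = 1"
        unfolding root_splits_def by blast
      have "\<phi> (f ^ p ^ 1 * 1) = f * \<phi> 1" using l unfolding root_linear_def by blast
      then have "f * \<phi> 1 = 1" using v by simp
      then have "f dvd 1" by (metis dvdI)
      then show False using assms(5) by simp
    qed
  qed
  show ?thesis unfolding fpt_def L_def[symmetric] by (rule cSup_upper[OF inL bdd])
qed

end
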